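(* For $n\in\mathbb{N}$: (1) if $n\in\{1,2\}$ then $c(n)=\lceil\log_2 n\rceil+1$ and $h(n)=\lceil\log_2 n\rceil$; (2) if $n\ge3$ then $c(n)\le\lceil\log_2 n\rceil$ and $h(n)\le\lceil\log_2 n\rceil-1$, and equality holds for infinitely many $n\ge 3$.
   Context: For $i\in\mathbb{N}$, $m\in\mathbb{N}_0$ let $d_i(m)=2^{i-1}-|(m\bmod 2^i)-2^{i-1}|$, and let $c(n)$ be the number of distinct values in $\{d_i(n):i\in\mathbb{N}\}$. For $k\ge0$, $0\le m<2^k$ let $\beta_k(m)\in\{0,1\}^k$ have $j$-th coordinate equal to the binary digit of $m$ of weight $2^{k-j}$. For $n\ge2$, $k=\lceil\log_2 n\rceil$, a pair $(n_0,n_1)$ with $n=n_0+n_1$, $n_0\ge n_1\ge1$ is a hypercubic bipartition (HCBP) of $n$ if for some $i\in\{1,\dots,k\}$ the hyperplane $x_i=1/2$ splits $\beta_k(0),\dots,\beta_k(n-1)$ into $n_0$ points on one side and $n_1$ on the other. For $n\ge2$, $h(n)$ is the number of HCBPs of $n$; $h(1)=0$. *)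

theory Defs
  imports Complex_Main
begin

definition d :: "nat \<Rightarrow> nat \<Rightarrow> int" where
  "d i m = 2 ^ (i - 1) - \<bar>int (m mod 2 ^ i) - 2 ^ (i - 1)\<bar>"

definition c :: "nat \<Rightarrow> nat" where
  "c n = card {d i n | i. i \<ge> 1}"

definition clog2 :: "nat \<Rightarrow> nat" where
  "clog2 n = nat \<lceil>log 2 (real n)\<rceil>"

definition beta :: "nat \<Rightarrow> nat \<Rightarrow> nat \<Rightarrow> nat" where
  "beta k m j = (m div 2 ^ (k - j)) mod 2"

definition side_count :: "nat \<Rightarrow> nat \<Rightarrow> nat \<Rightarrow> nat \<Rightarrow> nat" where
  "side_count n k i b = card {m. m < n \<and> beta k m i = b}"

definition is_HCBP :: "nat \<Rightarrow> nat \<Rightarrow> nat \<Rightarrow> bool" where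
  "is_HCBP n n0 n1 \<longleftrightarrow> n \<ge> 2 \<and> n = n0 + n1 \<and> n0 \<ge> n1 \<and> n1 \<ge> 1 \<and>
     (\<exists>i \<in> {1..clog2 n}.
        (side_count n (clog2 n) i 0 = n0 \<and> side_count n (clog2 n) i 1 = n1) \<or>
        (side_count n (clog2 n) i 0 = n1 \<and> side_count n (clog2 n) i 1 = n0))"

definition h :: "nat \<Rightarrow> nat" where
  "h n = (if n \<ge> 2 then card {(n0, n1). is_HCBP n n0 n1} else 0)"

end

theory Submission
  imports Defs
begin


lemma clog2_eq: assumes "2^j < n" "n \<le> 2^(j+1)" shows "clog2 n = j+1"
proof -
  have "\<lceil>log (real 2) (real n)\<rceil> = int j + 1"
    by (rule ceiling_log_nat_eq_if) (use assms in auto)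
  then show ?thesis unfolding clog2_def by simp
qed

lemma clog2_1: "clog2 1 = 0" unfolding clog2_def by simp

lemma clog2_ge: assumes "n \<ge> 1" shows "n \<le> 2^(clog2 n)"
proof -
  have "real n \<le> (2::real) ^ nat \<lceil>log 2 (real n)\<rceil>"
    by (rule power_of_nat_log_ge) simp
  hence "real n \<le> real (2 ^ clog2 n)" unfolding clog2_def by simp
  then show ?thesis by linarith
qed

lemma d_big: assumes "i \<ge> 1" "n \<le> 2^(i-1)" shows "d i n = int n"
proof -
  obtain j where j: "i = Suc j" using assms(1) by (cases i) auto
  have p: "(0::nat) < 2^j" by simp
  have a: "n \<le> 2^j" using assms(2) unfolding j by simp
  have b: "(2::nat)^j < 2*2^j" by simp
  from a b have "n < 2*2^j" by (rule le_less_trans)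
  hence "n < 2^i" unfolding j by simp
  hence "n mod 2^i = n" by simp
  moreover have "int n \<le> 2^j" using assms(2) unfolding j
    by (metis diff_Suc_1 of_nat_le_iff of_nat_numeral of_nat_power)
  ultimately show ?thesis unfolding d_def j by simp
qed

lemma aux_abs1: "(x::int) < P \<Longrightarrow> 0 \<le> x \<Longrightarrow> P - \<bar>1 + x - P\<bar> = (P - \<bar>x - P\<bar>) + 1" by arith
lemma aux_abs2: "(x::int) \<ge> P \<Longrightarrow> x + 1 < 2*P \<Longrightarrow> P - \<bar>1 + x - P\<bar> = (P - \<bar>x - P\<bar>) - 1" by arith
lemma aux_abs3: "(x::int) + 1 = 2*P \<Longrightarrow> P \<ge> 1 \<Longrightarrow> P - \<bar>0 - P\<bar> = (P - \<bar>x - P\<bar>) - 1" by arith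


lemma d_step: "d (Suc j) (Suc n) = (if (n div 2^j) mod 2 = 0 then d (Suc j) n + 1 else d (Suc j) n - 1)"
proof -
  define r where "r = n mod 2^(Suc j)"
  define r' where "r' = Suc n mod 2^(Suc j)"
  have e: "r = 2^j * ((n div 2^j) mod 2) + n mod 2^j"
    using mod_mult2_eq[of n "2^j" 2] unfolding r_def by (simp add: mult.commute)
  have lt: "n mod 2^j < 2^j" by simp
  have b: "r < 2 * 2^j" unfolding r_def by simp
  have e2: "r' = (if Suc r = 2^(Suc j) then 0 else Suc r)"
    unfolding r_def r'_def by (rule mod_Suc)
  have D1: "d (Suc j) n = 2^j - \<bar>int r - 2^j\<bar>" unfolding d_def r_def by simp
  have D2: "d (Suc j) (Suc n) = 2^j - \<bar>int r' - 2^j\<bar>" unfolding d_def r'_def by simp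
  show ?thesis
  proof (cases "(n div 2^j) mod 2 = 0")
    case True
    then have a: "r < 2^j" using e lt by simp
    have "Suc r \<noteq> 2^(Suc j)" using a by simp
    then have "r' = Suc r" using e2 by simp
    moreover have "int r < int (2^j)" using a by (rule of_nat_less_iff[THEN iffD2])
    ultimately show ?thesis using True D1 D2 aux_abs1[of "int r" "2^j"] by simp
  next
    case False
    then have m1: "(n div 2^j) mod 2 = 1" by simp
    then have a: "r \<ge> 2^j" using e by simp
    have "int (2^j) \<le> int r" using a by (rule of_nat_le_iff[THEN iffD2])
    then have ai: "2^j \<le> int r" by simp
    show ?thesis
    proof (cases "Suc r = 2^(Suc j)")
      case True
      then have "r' = 0" using e2 by simp
      moreover have "int (Suc r) = int (2^(Suc j))" using True by (rule arg_cong)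
      ultimately show ?thesis using D1 D2 m1 aux_abs3[of "int r" "2^j"] by simp
    next
      case F: False
      then have "r' = Suc r" using e2 by simp
      moreover have "Suc r < 2 * 2^j" using F b by simp
      hence "int (Suc r) < int (2 * 2^j)" by (rule of_nat_less_iff[THEN iffD2])
      ultimately show ?thesis using D1 D2 m1 ai aux_abs2[of "2^j" "int r"] by simp
    qed
  qed
qed

lemma d_zero: "d (Suc j) 0 = 0" unfolding d_def by simp

lemma d_nonneg: "i \<ge> 1 \<Longrightarrow> d i n \<ge> 0"
proof -
  assume "i \<ge> 1"
  then obtain j where j: "i = Suc j" by (cases i) auto
  have "n mod 2^i < 2^i" by simp
  hence "int (n mod 2^i) < int (2 * 2^j)" unfolding j by (simp only: of_nat_less_iff power_Suc)
  hence "int (n mod 2^i) < 2 * 2^j" by simp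
  moreover have "int (n mod 2^i) \<ge> 0" by simp
  ultimately show ?thesis unfolding d_def j by simp
qed

definition Zc :: "nat \<Rightarrow> nat \<Rightarrow> nat \<Rightarrow> nat" where
  "Zc n j b = card {m. m < n \<and> (m div 2^j) mod 2 = b}"

lemma Collect_Suc: "{m. m < Suc n \<and> P m} = {m. m < n \<and> P m} \<union> (if P n then {n} else {})"
  by (auto simp: less_Suc_eq)

lemma Zc_Suc: "Zc (Suc n) j b = Zc n j b + (if (n div 2^j) mod 2 = b then 1 else 0)"
proof -
  have f: "finite {m. m < n \<and> (m div 2^j) mod 2 = b}" by simp
  have nn: "n \<notin> {m. m < n \<and> (m div 2^j) mod 2 = b}" by simp
  show ?thesis unfolding Zc_def Collect_Suc[of n]
    using f nn by (auto simp: card_insert_if)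
qed

lemma count_lemma: "int (Zc n j 0) - int (Zc n j 1) = d (Suc j) n \<and> Zc n j 0 + Zc n j 1 = n"
proof (induction n)
  case 0
  then show ?case by (simp add: Zc_def d_zero)
next
  case (Suc n)
  show ?case
  proof (cases "(n div 2^j) mod 2 = 0")
    case True
    then show ?thesis using Suc.IH by (simp add: Zc_Suc d_step)
  next
    case False
    then have "(n div 2^j) mod 2 = 1" by simp
    then show ?thesis using Suc.IH False by (simp add: Zc_Suc d_step)
  qed
qed

lemma side_count_Zc: "side_count n k i b = Zc n (k - i) b"
  unfolding side_count_def Zc_def beta_def by simp

lemma D_alt: "(\<lambda>i. d i n) ` {1..K} = (\<lambda>i. d (Suc (K - i)) n) ` {1..K}"
proof
  show "(\<lambda>i. d i n) ` {1..K} \<subseteq> (\<lambda>i. d (Suc (K - i)) n) ` {1..K}"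
  proof
    fix x assume "x \<in> (\<lambda>i. d i n) ` {1..K}"
    then obtain i where i: "i \<in> {1..K}" "x = d i n" by auto
    have "Suc K - i \<in> {1..K}" "Suc (K - (Suc K - i)) = i" using i(1) by auto
    then show "x \<in> (\<lambda>i. d (Suc (K - i)) n) ` {1..K}" using i(2) by (metis image_eqI)
  qed
next
  show "(\<lambda>i. d (Suc (K - i)) n) ` {1..K} \<subseteq> (\<lambda>i. d i n) ` {1..K}"
  proof
    fix x assume "x \<in> (\<lambda>i. d (Suc (K - i)) n) ` {1..K}"
    then obtain i where i: "i \<in> {1..K}" "x = d (Suc (K - i)) n" by auto
    have "Suc (K - i) \<in> {1..K}" using i(1) by auto
    then show "x \<in> (\<lambda>i. d i n) ` {1..K}" using i(2) by (metis image_eqI)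
  qed
qed

lemma h_eq: assumes n2: "n \<ge> 2"
  shows "h n = card ((\<lambda>i. d i n) ` {1..clog2 n} - {int n})"
proof -
  define K where "K = clog2 n"
  define S where "S = {(n0, n1). is_HCBP n n0 n1}"
  define D where "D = (\<lambda>i. d i n) ` {1..K}"
  define G where "G = (\<lambda>p::nat\<times>nat. int (fst p) - int (snd p))"
  have cnt: "int (side_count n K i 0) - int (side_count n K i 1) = d (Suc (K - i)) n \<and>
             side_count n K i 0 + side_count n K i 1 = n" for i
    unfolding side_count_Zc by (rule count_lemma)
  have dnn: "d (Suc (K - i)) n \<ge> 0" for i by (rule d_nonneg) simp
  have HC: "is_HCBP n n0 n1 \<longleftrightarrow> n = n0 + n1 \<and> n0 \<ge> n1 \<and> n1 \<ge> 1 \<and>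
       (\<exists>i \<in> {1..K}. side_count n K i 0 = n0 \<and> side_count n K i 1 = n1)" for n0 n1
  proof
    assume H: "is_HCBP n n0 n1"
    then have b: "n = n0 + n1" "n0 \<ge> n1" "n1 \<ge> 1" unfolding is_HCBP_def by auto
    from H obtain i where i: "i \<in> {1..K}"
      "(side_count n K i 0 = n0 \<and> side_count n K i 1 = n1) \<or>
       (side_count n K i 0 = n1 \<and> side_count n K i 1 = n0)"
      unfolding is_HCBP_def K_def by blast
    have "side_count n K i 0 = n0 \<and> side_count n K i 1 = n1"
      using i(2) cnt[of i] dnn[of i] b(2) by auto
    then show "n = n0 + n1 \<and> n0 \<ge> n1 \<and> n1 \<ge> 1 \<and>
       (\<exists>i \<in> {1..K}. side_count n K i 0 = n0 \<and> side_count n K i 1 = n1)" using b i(1) by blast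
  next
    assume "n = n0 + n1 \<and> n0 \<ge> n1 \<and> n1 \<ge> 1 \<and>
       (\<exists>i \<in> {1..K}. side_count n K i 0 = n0 \<and> side_count n K i 1 = n1)"
    then show "is_HCBP n n0 n1" unfolding is_HCBP_def K_def[symmetric] using n2 by blast
  qed
  have inj: "inj_on G S"
  proof (rule inj_onI)
    fix p q assume "p \<in> S" "q \<in> S" "G p = G q"
    then show "p = q" unfolding S_def G_def HC by (cases p, cases q) auto
  qed
  have img: "G ` S = D - {int n}"
  proof
    show "G ` S \<subseteq> D - {int n}"
    proof
      fix x assume "x \<in> G ` S"
      then obtain n0 n1 where p: "is_HCBP n n0 n1" "x = int n0 - int n1" unfolding S_def G_def by auto
      then obtain i where i: "i \<in> {1..K}" "side_count n K i 0 = n0" "side_count n K i 1 = n1"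
        "n = n0 + n1" "n1 \<ge> 1" unfolding HC by blast
      have "x = d (Suc (K - i)) n" using cnt[of i] i p(2) by auto
      moreover have "x \<noteq> int n" using p(2) i(4,5) by auto
      ultimately show "x \<in> D - {int n}" unfolding D_def D_alt[of n K] using i(1) by auto
    qed
  next
    show "D - {int n} \<subseteq> G ` S"
    proof
      fix x assume "x \<in> D - {int n}"
      then obtain i where i: "i \<in> {1..K}" "x = d (Suc (K - i)) n" "x \<noteq> int n"
        unfolding D_def D_alt[of n K] by auto
      define n0 where "n0 = side_count n K i 0"
      define n1 where "n1 = side_count n K i 1"
      have c: "int n0 - int n1 = x" "n0 + n1 = n" using cnt[of i] i(2) unfolding n0_def n1_def by auto
      have "n0 \<ge> n1" using c dnn[of i] i(2) by linarith
      moreover have "n1 \<ge> 1"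
      proof (rule ccontr)
        assume "\<not> n1 \<ge> 1" then have "n1 = 0" by simp
        then show False using c i(3) by simp
      qed
      moreover have "n = n0 + n1" using c(2) by simp
      moreover have "\<exists>i \<in> {1..K}. side_count n K i 0 = n0 \<and> side_count n K i 1 = n1"
        using i(1) unfolding n0_def n1_def by blast
      ultimately have "n = n0 + n1 \<and> n0 \<ge> n1 \<and> n1 \<ge> 1 \<and>
         (\<exists>i \<in> {1..K}. side_count n K i 0 = n0 \<and> side_count n K i 1 = n1)"
        by (intro conjI)
      then have "is_HCBP n n0 n1" unfolding HC .
      then have "(n0, n1) \<in> S" unfolding S_def by simp
      moreover have "x = G (n0, n1)" using c(1) unfolding G_def by simp
      ultimately show "x \<in> G ` S" by (rule rev_image_eqI)
    qed
  qed
  have "h n = card S" unfolding h_def S_def using n2 by (rule if_P)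
  also have "\<dots> = card (G ` S)" using inj by (simp add: card_image)
  finally show ?thesis using img unfolding D_def K_def by simp
qed

lemma c_set: assumes n1: "n \<ge> 1"
  shows "{d i n | i. i \<ge> 1} = (\<lambda>i. d i n) ` {1..clog2 n} \<union> {int n}"
proof -
  define K where "K = clog2 n"
  have nK: "n \<le> 2^K" using clog2_ge[OF n1] unfolding K_def .
  have big: "d i n = int n" if "i \<ge> Suc K" for i
  proof (rule d_big)
    show "1 \<le> i" using that by simp
    have "(2::nat)^K \<le> 2^(i-1)" using that by (intro power_increasing) auto
    then show "n \<le> 2^(i-1)" using nK by linarith
  qed
  show ?thesis unfolding K_def[symmetric]
  proof
    show "{d i n | i. i \<ge> 1} \<subseteq> (\<lambda>i. d i n) ` {1..K} \<union> {int n}"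
    proof
      fix x assume "x \<in> {d i n | i. i \<ge> 1}"
      then obtain i where i: "x = d i n" "i \<ge> 1" by blast
      show "x \<in> (\<lambda>i. d i n) ` {1..K} \<union> {int n}"
      proof (cases "i \<le> K")
        case True then show ?thesis using i by auto
      next
        case False then show ?thesis using i big[of i] by auto
      qed
    qed
  next
    show "(\<lambda>i. d i n) ` {1..K} \<union> {int n} \<subseteq> {d i n | i. i \<ge> 1}"
    proof
      fix x assume "x \<in> (\<lambda>i. d i n) ` {1..K} \<union> {int n}"
      then show "x \<in> {d i n | i. i \<ge> 1}"
      proof
        assume "x \<in> (\<lambda>i. d i n) ` {1..K}" then show ?thesis by auto
      next
        assume "x \<in> {int n}" then have "x = d (Suc K) n" using big[of "Suc K"] by simp
        moreover have "Suc K \<ge> 1" by simp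
        ultimately show ?thesis by (intro CollectI exI[of _ "Suc K"] conjI)
      qed
    qed
  qed
qed

lemma c_eq: assumes "n \<ge> 1" shows "c n = card ((\<lambda>i. d i n) ` {1..clog2 n} \<union> {int n})"
  unfolding c_def c_set[OF assms] ..

lemma c_h: assumes "n \<ge> 2" shows "c n = h n + 1"
proof -
  define D where "D = (\<lambda>i. d i n) ` {1..clog2 n}"
  have f: "finite (D - {int n})" unfolding D_def by simp
  have e: "D \<union> {int n} = insert (int n) (D - {int n})" by auto
  have "card (insert (int n) (D - {int n})) = Suc (card (D - {int n}))"
    using f by (rule card_insert_disjoint) simp
  then have "card (D \<union> {int n}) = card (D - {int n}) + 1" unfolding e by simp
  moreover have "c n = card (D \<union> {int n})" unfolding D_def using assms by (intro c_eq) simp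
  moreover have "h n = card (D - {int n})" unfolding D_def using assms by (rule h_eq)
  ultimately show ?thesis by simp
qed



lemma d_mod8: assumes "i \<le> 3" shows "d i n = d i (n mod 8)"
proof -
  have "(2::nat)^i dvd 2^3" using assms by (rule le_imp_power_dvd)
  then have "n mod 8 mod 2^i = n mod 2^i" by (simp add: mod_mod_cancel)
  then show ?thesis unfolding d_def by simp
qed

lemma collision_small: assumes "r < 8" shows "d 1 r = d 2 r \<or> d 2 r = d 3 r"
proof -
  have "r \<in> {0,1,2,3,4,5,6,7}" using assms by auto
  then show ?thesis by (auto simp: d_def)
qed

lemma collision: "d 1 n = d 2 n \<or> d 2 n = d 3 n"
  using collision_small[of "n mod 8"] d_mod8[of 1 n] d_mod8[of 2 n] d_mod8[of 3 n] by simp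

lemma card_collide: assumes "a \<in> A" "b \<in> A" "a \<noteq> b" "f a = f b" "finite A"
  shows "card (f ` A) \<le> card A - 1"
proof -
  have i: "f ` A = insert (f a) (f ` (A - {a}))" using assms(1) by (metis image_insert insert_Diff)
  have "f a \<in> f ` (A - {a})" using assms(2,3,4) by (metis DiffI image_eqI singletonD)
  then have "f ` A = f ` (A - {a})" using i by (simp add: insert_absorb)
  then have "card (f ` A) \<le> card (A - {a})" by (simp add: card_image_le assms(5))
  then show ?thesis using assms by simp
qed

lemma c_le: assumes "n \<ge> 3" shows "c n \<le> clog2 n"
proof -
  define K where "K = clog2 n"
  have nK: "n \<le> 2^K" using clog2_ge[of n] assms unfolding K_def by simp
  have K2: "K \<ge> 2"
  proof (rule ccontr)
    assume "\<not> K \<ge> 2" then have "K \<le> 1" by simp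
    then have "(2::nat)^K \<le> 2^1" by (intro power_increasing) auto
    then show False using nK assms by simp
  qed
  have "(\<lambda>i. d i n) ` {1..K} \<union> {int n} = (\<lambda>i. d i n) ` {1..K+1}"
    using c_set[of n] assms unfolding K_def[symmetric] c_set
  proof -
    have big: "d (Suc K) n = int n" using nK by (intro d_big) auto
    have "{1..K+1} = insert (Suc K) {1..K}" by auto
    then show ?thesis using big by auto
  qed
  then have "c n = card ((\<lambda>i. d i n) ` {1..K+1})" using c_eq[of n] assms unfolding K_def by simp
  also have "\<dots> \<le> card {1..K+1} - 1"
  proof (cases "d 1 n = d 2 n")
    case True then show ?thesis using K2 by (intro card_collide[of 1 _ 2]) auto
  next
    case False then have "d 2 n = d 3 n" using collision by blast
    then show ?thesis using K2 by (intro card_collide[of 2 _ 3]) auto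
  qed
  finally show ?thesis unfolding K_def by simp
qed

lemma part1: "(\<forall>n::nat. n \<in> {1, 2} \<longrightarrow> c n = clog2 n + 1 \<and> h n = clog2 n)"
proof (intro allI impI)
  fix n :: nat assume "n \<in> {1,2}"
  then show "c n = clog2 n + 1 \<and> h n = clog2 n"
  proof
    assume n: "n = 1"
    have "c 1 = card ((\<lambda>i. d i 1) ` {1..clog2 1} \<union> {int 1})" by (rule c_eq) simp
    then have "c 1 = 1" using clog2_1 by simp
    then show ?thesis using n clog2_1 by (simp add: h_def)
  next
    assume "n \<in> {2}" then have n: "n = 2" by simp
    have k: "clog2 2 = 1" using clog2_eq[of 0 2] by simp
    have d12: "d 1 2 = 0" unfolding d_def by simp
    have "c 2 = card ((\<lambda>i. d i 2) ` {1..clog2 2} \<union> {int 2})" by (rule c_eq) simp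
    then have c2: "c 2 = 2" using k d12 by simp
    then show ?thesis using n k c_h[of 2] by simp
  qed
qed



definition gg :: "nat \<Rightarrow> nat" where "gg t = (\<Sum>j<t. 4^j)"

lemma gg_Suc: "gg (Suc t) = gg t + 4^t" unfolding gg_def by simp

lemma gg3: "3 * gg t + 1 = 4^t"
  by (induction t) (simp_all add: gg_def)

lemma gg_add: "gg (a + b) = gg a + 4^a * gg b"
proof (induction b)
  case 0 then show ?case by (simp add: gg_def)
next
  case (Suc b)
  have "gg (a + Suc b) = gg (a + b) + 4^(a+b)" by (simp add: gg_Suc)
  also have "\<dots> = gg a + 4^a * gg b + 4^a * 4^b" using Suc by (simp add: power_add)
  also have "\<dots> = gg a + 4^a * gg (Suc b)" by (simp add: gg_Suc algebra_simps)
  finally show ?case .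
qed

lemma gg_pos: "t \<ge> 1 \<Longrightarrow> gg t \<ge> 1"
  by (cases t) (simp_all add: gg_Suc Suc_le_eq)

lemma mod_aux: "(a::nat) < B \<Longrightarrow> (a + B * q) mod B = a" by simp

lemma four_pow: "(4::nat)^s = 2^(2*s)"
  by (simp add: power_mult)

lemma mod_even: assumes "s \<le> m + 1" shows "gg (m+1) mod 2^(2*s) = gg s"
proof -
  have "gg (m+1) = gg s + 4^s * gg (m+1-s)" using gg_add[of s "m+1-s"] assms by simp
  then have e: "gg (m+1) = gg s + 2^(2*s) * gg (m+1-s)" by (simp add: four_pow)
  have "gg s < 2^(2*s)" using gg3[of s] four_pow[of s] by linarith
  then show ?thesis unfolding e by (rule mod_aux)
qed

lemma mod_odd: assumes "t \<le> m" shows "gg (m+1) mod 2^(2*t+1) = gg (t+1)"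
proof -
  have "gg (m+1) = gg (t+1) + 4^(t+1) * gg (m-t)" using gg_add[of "t+1" "m-t"] assms by simp
  moreover have "(4::nat)^(t+1) = 2^(2*t+1) * 2" by (simp add: four_pow)
  ultimately have e: "gg (m+1) = gg (t+1) + 2^(2*t+1) * (2 * gg (m-t))" by simp
  have "3 * gg (t+1) + 1 = 2^(2*t+1) * 2" using gg3[of "t+1"] four_pow[of "t+1"] by simp
  then have "gg (t+1) < 2^(2*t+1)" by linarith
  then show ?thesis unfolding e by (rule mod_aux)
qed

lemma d_even: assumes "1 \<le> s" "s \<le> m + 1" shows "d (2*s) (gg (m+1)) = int (gg s)"
proof -
  obtain u where u: "s = Suc u" using assms(1) by (cases s) auto
  have p: "(2::nat)^(2*s - 1) = 2 * 4^u" unfolding u by (simp add: four_pow)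
  have "3 * gg s + 1 = 4 * 4^u" using gg3[of s] unfolding u by simp
  then have lt: "gg s \<le> 2^(2*s - 1)" using p by linarith
  then have lti: "int (gg s) \<le> 2^(2*s - 1)"
    by (metis of_nat_le_iff of_nat_numeral of_nat_power)
  show ?thesis unfolding d_def mod_even[OF assms(2)] using lti by simp
qed

lemma d_odd: assumes "t \<le> m" shows "d (2*t+1) (gg (m+1)) = int (4^t) - int (gg t)"
proof -
  have g: "gg (t+1) = gg t + 4^t" by (simp add: gg_Suc)
  have p: "(2::int)^(2*t+1 - 1) = int (4^t)" by (simp add: four_pow)
  show ?thesis unfolding d_def mod_odd[OF assms] p g by simp
qed

lemma fam_step: assumes "2 \<le> i" "i < 2*m+2"
  shows "d i (gg (m+1)) < d (Suc i) (gg (m+1))"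
proof (cases "even i")
  case True
  then obtain s where s: "i = 2*s" by (rule evenE)
  have s1: "1 \<le> s" "s \<le> m" using assms s by auto
  have a: "d i (gg (m+1)) = int (gg s)" unfolding s by (rule d_even) (use s1 in auto)
  have b: "d (Suc i) (gg (m+1)) = int (4^s) - int (gg s)"
    using d_odd[of s m] s1 unfolding s by simp
  have "3 * gg s + 1 = 4^s" by (rule gg3)
  then have "int (3 * gg s + 1) = int (4^s)" by (rule arg_cong)
  then show ?thesis unfolding a b by simp
next
  case False
  then obtain t where t: "i = 2*t+1" by (rule oddE)
  have t1: "1 \<le> t" "t \<le> m" using assms t by auto
  have a: "d i (gg (m+1)) = int (4^t) - int (gg t)" unfolding t by (rule d_odd) (use t1 in auto)
  have b: "d (Suc i) (gg (m+1)) = int (gg (t+1))"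
    using d_even[of "t+1" m] t1 unfolding t by (simp add: mult.commute)
  have "gg (t+1) = gg t + 4^t" by (simp add: gg_Suc)
  then have "int (gg (t+1)) = int (gg t) + int (4^t)" by simp
  moreover have "gg t \<ge> 1" using t1(1) by (rule gg_pos)
  ultimately show ?thesis unfolding a b by simp
qed

lemma chain: assumes "\<And>i. a \<le> i \<Longrightarrow> i < b \<Longrightarrow> (f::nat \<Rightarrow> int) i < f (Suc i)"
  shows "a \<le> i \<Longrightarrow> i < j \<Longrightarrow> j \<le> b \<Longrightarrow> f i < f j"
proof (induction j)
  case 0 then show ?case by simp
next
  case (Suc j)
  show ?case
  proof (cases "i = j")
    case True then show ?thesis using assms Suc.prems by simp
  next
    case False
    then have "f i < f j" using Suc by simp
    also have "f j < f (Suc j)" using assms Suc.prems False by simp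
    finally show ?thesis .
  qed
qed

lemma fam_inj: "inj_on (\<lambda>i. d i (gg (m+1))) {2..2*m+2}"
proof (rule inj_onI)
  fix x y assume xy: "x \<in> {2..2*m+2}" "y \<in> {2..2*m+2}" "d x (gg (m+1)) = d y (gg (m+1))"
  have ch: "2 \<le> i \<Longrightarrow> i < j \<Longrightarrow> j \<le> 2*m+2 \<Longrightarrow> d i (gg (m+1)) < d j (gg (m+1))" for i j
    using chain[of 2 "2*m+2" "\<lambda>i. d i (gg (m+1))" i j] fam_step[of _ m] by blast
  show "x = y"
  proof (rule ccontr)
    assume "x \<noteq> y"
    then have "x < y \<or> y < x" by arith
    then show False using ch[of x y] ch[of y x] xy by auto
  qed
qed

lemma fam_clog: assumes "m \<ge> 1" shows "clog2 (gg (m+1)) = 2*m+1"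
proof (rule clog2_eq)
  have "gg (m+1) = gg m + 4^m" by (simp add: gg_Suc)
  moreover have "gg m \<ge> 1" using assms by (rule gg_pos)
  ultimately show "2^(2*m) < gg (m+1)" by (simp add: four_pow)
  have "3 * gg (m+1) + 1 = 4 * 4^m" using gg3[of "m+1"] by simp
  then show "gg (m+1) \<le> 2^(2*m+1)" by (simp add: four_pow)
qed

lemma fam_c: assumes "m \<ge> 1" shows "c (gg (m+1)) = clog2 (gg (m+1))"
proof -
  define n where "n = gg (m+1)"
  have n3: "n \<ge> 3"
  proof -
    have "gg 2 \<le> n" unfolding n_def using gg_add[of 2 "m-1"] assms by simp
    moreover have "gg 2 = 5" by (simp add: gg_def numeral_2_eq_2)
    ultimately show ?thesis by simp
  qed
  have "(\<lambda>i. d i n) ` {2..2*m+2} \<subseteq> {d i n | i. i \<ge> 1}" by auto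
  moreover have "finite {d i n | i. i \<ge> 1}" using c_set[of n] n3 by simp
  ultimately have "card ((\<lambda>i. d i n) ` {2..2*m+2}) \<le> c n" unfolding c_def by (rule card_mono[rotated])
  moreover have "card ((\<lambda>i. d i n) ` {2..2*m+2}) = 2*m+1"
    using fam_inj[of m] unfolding n_def by (simp add: card_image)
  ultimately have "2*m+1 \<le> c n" by simp
  moreover have "c n \<le> clog2 n" using n3 by (rule c_le)
  ultimately show ?thesis using fam_clog[OF assms] unfolding n_def by simp
qed

lemma part3: "infinite {n::nat. n \<ge> 3 \<and> c n = clog2 n \<and> h n = clog2 n - 1}"
proof -
  have sm: "strict_mono (\<lambda>m. gg (m+1))"
    unfolding strict_mono_Suc_iff by (simp add: gg_Suc)
  have sub: "(\<lambda>m. gg (m+1)) ` {1..} \<subseteq> {n::nat. n \<ge> 3 \<and> c n = clog2 n \<and> h n = clog2 n - 1}"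
  proof
    fix x assume "x \<in> (\<lambda>m. gg (m+1)) ` {1..}"
    then obtain m where m: "m \<ge> 1" "x = gg (m+1)" by auto
    have "gg 2 \<le> x" unfolding m using gg_add[of 2 "m-1"] m by simp
    moreover have "gg 2 = 5" by (simp add: gg_def numeral_2_eq_2)
    ultimately have x3: "x \<ge> 3" by simp
    have cx: "c x = clog2 x" using fam_c[OF m(1)] m(2) by simp
    have "c x = h x + 1" using x3 by (intro c_h) simp
    then show "x \<in> {n::nat. n \<ge> 3 \<and> c n = clog2 n \<and> h n = clog2 n - 1}" using x3 cx by simp
  qed
  have "infinite ((\<lambda>m. gg (m+1)) ` {1::nat..})"
    using sm by (simp add: strict_mono_imp_inj_on finite_image_iff infinite_Ici)
  then show ?thesis using sub by (rule infinite_super[rotated])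
qed

theorem mainTheorem12:
  shows "(\<forall>n::nat. n \<in> {1, 2} \<longrightarrow> c n = clog2 n + 1 \<and> h n = clog2 n)
       \<and> (\<forall>n::nat. n \<ge> 3 \<longrightarrow> c n \<le> clog2 n \<and> h n \<le> clog2 n - 1)
       \<and> infinite {n::nat. n \<ge> 3 \<and> c n = clog2 n \<and> h n = clog2 n - 1}"
proof (intro conjI)
  show "\<forall>n::nat. n \<in> {1, 2} \<longrightarrow> c n = clog2 n + 1 \<and> h n = clog2 n" by (rule part1)
  show "\<forall>n::nat. n \<ge> 3 \<longrightarrow> c n \<le> clog2 n \<and> h n \<le> clog2 n - 1"
  proof (intro allI impI)
    fix n :: nat assume n: "n \<ge> 3"
    have "c n \<le> clog2 n" using n by (rule c_le)
    moreover have "c n = h n + 1" using n by (intro c_h) simp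
    ultimately show "c n \<le> clog2 n \<and> h n \<le> clog2 n - 1" by simp
  qed
  show "infinite {n::nat. n \<ge> 3 \<and> c n = clog2 n \<and> h n = clog2 n - 1}" by (rule part3)
qed

end
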